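(* For every $q\in(0,1)$ there exists an $S$-gap shift which has the specification property and has entropy $q$.
   Context: For a nonempty set $S\subseteq\{0,1,2,\dots\}$, the $S$-gap shift $X(S)\subseteq\{0,1\}^{\mathbb{Z}}$ is the set of bi-infinite binary sequences in which the number of consecutive zeros between ones is always an element of $S$. The entropy of a shift $X$ is $h(X)=\lim_n\frac1n\log|\mathcal{B}_n(X)|$, where $\mathcal{B}_n(X)$ is the set of words of length $n$ occurring in points of $X$ and $\log$ is to base $2$. $X$ has the specification property if there is $N\ge1$ such that for all $u,v\in\mathcal{B}(X)=\bigcup_n\mathcal{B}_n(X)$ there exists $w\in\mathcal{B}_N(X)$ with $uwv\in\mathcal{B}(X)$. *)

theory Defs
  imports Complex_Main
begin

definition gap_shift :: "nat set \<Rightarrow> (int \<Rightarrow> nat) set" where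
  "gap_shift S = {x. (\<forall>i. x i \<in> {0, 1}) \<and>
     (\<forall>i j. i < j \<and> x i = 1 \<and> x j = 1 \<and> (\<forall>k. i < k \<and> k < j \<longrightarrow> x k = 0)
        \<longrightarrow> nat (j - i - 1) \<in> S)}"

definition blocks :: "(int \<Rightarrow> nat) set \<Rightarrow> nat \<Rightarrow> nat list set" where
  "blocks X n = {map (\<lambda>k. x (i + int k)) [0..<n] | x i. x \<in> X}"

definition language :: "(int \<Rightarrow> nat) set \<Rightarrow> nat list set" where
  "language X = (\<Union>n. blocks X n)"

definition has_entropy :: "(int \<Rightarrow> nat) set \<Rightarrow> real \<Rightarrow> bool" where
  "has_entropy X h \<longleftrightarrow>
     (\<lambda>n. log 2 (real (card (blocks X n))) / real n) \<longlonglongrightarrow> h"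

definition has_specification :: "(int \<Rightarrow> nat) set \<Rightarrow> bool" where
  "has_specification X \<longleftrightarrow> (\<exists>N\<ge>1. \<forall>u\<in>language X. \<forall>v\<in>language X.
      \<exists>w\<in>blocks X N. u @ w @ v \<in> language X)"

end

theory Submission
  imports Defs "HOL-Real_Asymp.Real_Asymp"
begin


definition lz :: "nat list \<Rightarrow> nat" where "lz w = length (takeWhile (\<lambda>x. x \<noteq> 1) w)"
definition tz :: "nat list \<Rightarrow> nat" where "tz w = lz (rev w)"

fun ok :: "nat set \<Rightarrow> nat list \<Rightarrow> bool" where
"ok S [] = True" |
"ok S (a # w) = ((a = 0 \<or> a = 1) \<and> ok S w \<and> (a = 1 \<and> 1 \<in> set w \<longrightarrow> lz w \<in> S))"

lemma lz_append: "lz (u @ v) = (if 1 \<in> set u then lz u else length u + lz v)"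
  unfolding lz_def by (induction u) auto

lemma lz_Cons1[simp]: "lz (1 # w) = 0" unfolding lz_def by simp
lemma lz_rep0: "lz (replicate n 0 @ v) = n + lz v"
  by (simp add: lz_append)

lemma tz_Cons: "tz (a # u) = (if 1 \<in> set u then tz u else if a = 1 then length u else Suc (length u))"
  unfolding tz_def by (simp add: lz_append) (simp add: lz_def)

lemma ok_append: "ok S (u @ v) \<longleftrightarrow> ok S u \<and> ok S v \<and> (1 \<in> set u \<and> 1 \<in> set v \<longrightarrow> tz u + lz v \<in> S)"
proof (induction u)
  case Nil then show ?case by simp
next
  case (Cons a u)
  show ?case using Cons by (auto simp: lz_append tz_Cons)
qed

lemma ok_set: "ok S w \<Longrightarrow> set w \<subseteq> {0,1}"
  by (induction w) auto

definition idxok :: "nat set \<Rightarrow> nat list \<Rightarrow> bool" where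
 "idxok S w \<longleftrightarrow> (\<forall>k<length w. w!k = 0 \<or> w!k = 1) \<and>
   (\<forall>i j. i<j \<and> j<length w \<and> w!i=1 \<and> w!j=1 \<and> (\<forall>k. i<k \<and> k<j \<longrightarrow> w!k=0) \<longrightarrow> j-i-1 \<in> S)"

lemma lz_eq: assumes "p < length w" "w!p = 1" "\<forall>k<p. w!k \<noteq> 1" shows "lz w = p"
proof -
  have "takeWhile (\<lambda>x. x \<noteq> 1) w = take p w"
    by (rule takeWhile_eq_take_P_nth) (use assms in auto)
  then show ?thesis using assms by (simp add: lz_def)
qed

lemma lz_props: assumes "1 \<in> set w" shows "lz w < length w" "w ! lz w = 1" "\<forall>k<lz w. w!k \<noteq> 1"
proof -
  show "lz w < length w" using assms unfolding lz_def by (induction w) auto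
  then show "w ! lz w = 1" unfolding lz_def using nth_length_takeWhile by fastforce
  show "\<forall>k<lz w. w!k \<noteq> 1" unfolding lz_def
    by (metis (mono_tags, lifting) takeWhile_nth nth_mem set_takeWhileD)
qed

lemma ok_idx: "ok S w \<longleftrightarrow> idxok S w"
proof (induction w)
  case Nil then show ?case by (simp add: idxok_def)
next
  case (Cons a w)
  show ?case
  proof
    assume H: "ok S (a # w)"
    then have A: "a = 0 \<or> a = 1" and W: "idxok S w" and L: "a = 1 \<and> 1 \<in> set w \<longrightarrow> lz w \<in> S"
      using Cons by auto
    show "idxok S (a # w)" unfolding idxok_def
    proof (intro conjI allI impI)
      fix k assume "k < length (a # w)" then show "(a # w) ! k = 0 \<or> (a # w) ! k = 1"
        using A W unfolding idxok_def by (cases k) auto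
    next
      fix i j assume P: "i < j \<and> j < length (a # w) \<and> (a # w) ! i = 1 \<and> (a # w) ! j = 1 \<and>
          (\<forall>k. i < k \<and> k < j \<longrightarrow> (a # w) ! k = 0)"
      show "j - i - 1 \<in> S"
      proof (cases i)
        case 0
        then obtain j' where j: "j = Suc j'" using P by (cases j) auto
        have "a = 1" using P 0 by simp
        have "w ! j' = 1" "j' < length w" using P j by auto
        moreover have "\<forall>k<j'. w!k \<noteq> 1"
        proof (intro allI impI)
          fix k assume "k < j'" then have "(a # w) ! Suc k = 0" using P 0 j by blast
          then show "w!k \<noteq> 1" by simp
        qed
        ultimately have "lz w = j'" by (intro lz_eq)
        moreover have "1 \<in> set w" using \<open>w ! j' = 1\<close> \<open>j' < length w\<close> nth_mem by fastforce
        ultimately show ?thesis using L \<open>a = 1\<close> 0 j by simp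
      next
        case (Suc i')
        then obtain j' where j: "j = Suc j'" using P by (cases j) auto
        have "\<forall>k. i' < k \<and> k < j' \<longrightarrow> w ! k = 0"
        proof (intro allI impI)
          fix k assume "i' < k \<and> k < j'" then have "(a # w) ! Suc k = 0" using P Suc j by auto
          then show "w!k = 0" by simp
        qed
        then have "j' - i' - 1 \<in> S" using W P Suc j unfolding idxok_def by auto
        then show ?thesis using Suc j by simp
      qed
    qed
  next
    assume H: "idxok S (a # w)"
    have A: "a = 0 \<or> a = 1" using H unfolding idxok_def by force
    have W: "idxok S w" unfolding idxok_def
    proof (intro conjI allI impI)
      fix k assume "k < length w" then show "w ! k = 0 \<or> w ! k = 1"
        using H unfolding idxok_def by (metis Suc_less_eq length_Cons nth_Cons_Suc)
    next
      fix i j assume P: "i < j \<and> j < length w \<and> w ! i = 1 \<and> w ! j = 1 \<and> (\<forall>k. i < k \<and> k < j \<longrightarrow> w ! k = 0)"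
      have "\<forall>k. Suc i < k \<and> k < Suc j \<longrightarrow> (a#w) ! k = 0"
      proof (intro allI impI)
        fix k assume "Suc i < k \<and> k < Suc j" then obtain k' where "k = Suc k'" "i < k'" "k' < j"
          by (cases k) auto
        then show "(a#w) ! k = 0" using P by simp
      qed
      then have "Suc j - Suc i - 1 \<in> S" using H P unfolding idxok_def
        by (metis Suc_less_eq length_Cons nth_Cons_Suc)
      then show "j - i - 1 \<in> S" by simp
    qed
    have L: "lz w \<in> S" if "a = 1" "1 \<in> set w"
    proof -
      note lp = lz_props[OF that(2)]
      have "\<forall>k. 0 < k \<and> k < Suc (lz w) \<longrightarrow> (a#w) ! k = 0"
      proof (intro allI impI)
        fix k assume "0 < k \<and> k < Suc (lz w)" then obtain k' where "k = Suc k'" "k' < lz w"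
          by (cases k) auto
        moreover have "w ! k' = 0 \<or> w ! k' = 1" using W \<open>k' < lz w\<close> lp(1) unfolding idxok_def by auto
        ultimately show "(a#w) ! k = 0" using lp(3) by auto
      qed
      then have "Suc (lz w) - 0 - 1 \<in> S" using H lp that(1) unfolding idxok_def
        by (metis Suc_less_eq length_Cons nth_Cons_0 nth_Cons_Suc zero_less_Suc)
      then show ?thesis by simp
    qed
    show "ok S (a # w)" using A W L Cons by auto
  qed
qed

lemma blocks_eq: "blocks (gap_shift S) n = {w. length w = n \<and> ok S w}"
proof (intro set_eqI iffI)
  fix w assume "w \<in> blocks (gap_shift S) n"
  then obtain x i where w: "w = map (\<lambda>k. x (i + int k)) [0..<n]" and x: "x \<in> gap_shift S"
    unfolding blocks_def by blast
  have X1: "\<forall>i. x i \<in> {0,1}" using x unfolding gap_shift_def by blast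
  have X2: "\<And>i j. i < j \<Longrightarrow> x i = 1 \<Longrightarrow> x j = 1 \<Longrightarrow> (\<forall>k. i < k \<and> k < j \<longrightarrow> x k = 0) \<Longrightarrow> nat (j - i - 1) \<in> S"
    using x unfolding gap_shift_def by blast
  have "idxok S w" unfolding idxok_def
  proof (intro conjI allI impI)
    fix k assume "k < length w" then show "w ! k = 0 \<or> w ! k = 1" using X1 w by auto
  next
    fix a b assume P: "a < b \<and> b < length w \<and> w ! a = 1 \<and> w ! b = 1 \<and> (\<forall>k. a < k \<and> k < b \<longrightarrow> w ! k = 0)"
    have "\<forall>k. i + int a < k \<and> k < i + int b \<longrightarrow> x k = 0"
    proof (intro allI impI)
      fix k assume K: "i + int a < k \<and> k < i + int b"
      define k' where "k' = nat (k - i)"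
      have "k = i + int k'" "a < k'" "k' < b" using K by (auto simp: k'_def)
      then show "x k = 0" using P w by auto
    qed
    then have "nat ((i + int b) - (i + int a) - 1) \<in> S" using P w by (intro X2) auto
    moreover have "nat ((i + int b) - (i + int a) - 1) = b - a - 1" using P by auto
    ultimately show "b - a - 1 \<in> S" by simp
  qed
  then show "w \<in> {w. length w = n \<and> ok S w}" using w ok_idx by auto
next
  fix w assume "w \<in> {w. length w = n \<and> ok S w}"
  then have L: "length w = n" and I: "idxok S w" using ok_idx by auto
  define x where "x t = (if 0 \<le> t \<and> t < int n then w ! nat t else 0)" for t
  have X1: "x t = 0 \<or> x t = 1" for t
  proof (cases "0 \<le> t \<and> t < int n")
    case True then have "nat t < length w" using L by auto
    then show ?thesis using I True unfolding x_def idxok_def by auto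
  qed (auto simp: x_def)
  have "x \<in> gap_shift S" unfolding gap_shift_def
  proof (intro CollectI conjI allI impI)
    fix t show "x t \<in> {0,1}" using X1[of t] by auto
  next
    fix i j assume "i < j \<and> x i = 1 \<and> x j = 1 \<and> (\<forall>k. i < k \<and> k < j \<longrightarrow> x k = 0)"
    then have P: "i < j" "x i = 1" "x j = 1" "\<forall>k. i < k \<and> k < j \<longrightarrow> x k = 0" by auto
    have ri: "0 \<le> i \<and> i < int n" using P(2) unfolding x_def by (auto split: if_splits)
    have rj: "0 \<le> j \<and> j < int n" using P(3) unfolding x_def by (auto split: if_splits)
    have "\<forall>k. nat i < k \<and> k < nat j \<longrightarrow> w ! k = 0"
    proof (intro allI impI)
      fix k assume "nat i < k \<and> k < nat j"
      then have "i < int k \<and> int k < j" using ri rj by linarith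
      then have "x (int k) = 0" using P(4) by blast
      moreover have "k < n" using \<open>nat i < k \<and> k < nat j\<close> rj by linarith
      ultimately show "w ! k = 0" unfolding x_def by auto
    qed
    moreover have "w ! nat i = 1" "w ! nat j = 1" using P ri rj unfolding x_def by auto
    ultimately have "nat j - nat i - 1 \<in> S" using I L P(1) ri rj unfolding idxok_def by auto
    moreover have "nat (j - i - 1) = nat j - nat i - 1" using ri rj P(1) by auto
    ultimately show "nat (j - i - 1) \<in> S" by simp
  qed
  moreover have "w = map (\<lambda>k. x (0 + int k)) [0..<n]"
    by (rule nth_equalityI) (auto simp: L x_def)
  ultimately show "w \<in> blocks (gap_shift S) n" unfolding blocks_def by blast
qed

lemma language_eq: "language (gap_shift S) = {w. ok S w}"
  unfolding language_def using blocks_eq by auto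

lemma ok_rep0: "ok S (replicate n 0)" by (induction n) auto

lemma ok_rep1: "0 \<in> S \<Longrightarrow> ok S (replicate n 1)"
  by (induction n) (auto simp: lz_def)


lemma spec_lemma:
  assumes S0: "0 \<in> S" and D: "D \<ge> 1" and syn: "\<forall>t. \<exists>a<D. t + a \<in> S"
  shows "has_specification (gap_shift S)"
  unfolding has_specification_def
proof (intro exI[of _ "2*D+1"] conjI ballI)
  show "1 \<le> 2*D+1" by simp
  fix u v assume "u \<in> language (gap_shift S)" "v \<in> language (gap_shift S)"
  then have u: "ok S u" and v: "ok S v" by (auto simp: language_eq)
  obtain a where a: "a < D" "tz u + a \<in> S" using syn by blast
  obtain c where c0: "c < D" "lz v + c \<in> S" using syn by blast
  have c: "c < D" "c + lz v \<in> S" using c0 by (auto simp: add.commute)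
  define k' where "k' = 2*D - a - c"
  define w where "w = replicate a (0::nat) @ replicate (Suc k') 1 @ replicate c 0"
  have lw: "length w = 2*D+1" using a c by (simp add: w_def k'_def)
  have n1: "1 \<notin> set (replicate n (0::nat))" for n by simp
  have y1: "1 \<in> set (replicate (Suc k') (1::nat))" by simp
  have o1: "ok S (replicate (Suc k') 1 @ replicate c 0)"
    unfolding ok_append using S0 ok_rep0 ok_rep1 n1 by blast
  have okw: "ok S w" using ok_append[of S "replicate a 0" "replicate (Suc k') 1 @ replicate c 0"] o1 ok_rep0 n1
    unfolding w_def by blast
  have l1: "lz (replicate (Suc k') 1 @ x) = 0" for x by (simp add: lz_def)
  have tzw: "tz w = c" unfolding w_def tz_def
    using n1 y1 l1 by (simp only: rev_append rev_replicate append_assoc lz_append if_False length_replicate; (simp)?)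
  have lzw: "lz (w @ v) = a" unfolding w_def
    using n1 y1 l1 by (simp only: append_assoc lz_append if_False length_replicate; (simp)?)
  have okwv: "ok S (w @ v)" unfolding ok_append[of S w v] using okw v tzw c by simp
  have "ok S (u @ w @ v)" unfolding ok_append[of S u "w @ v"] using u okwv lzw a by simp
  moreover have "w \<in> blocks (gap_shift S) (2*D+1)" using lw okw by (simp add: blocks_eq)
  ultimately show "\<exists>w\<in>blocks (gap_shift S) (2 * D + 1). u @ w @ v \<in> language (gap_shift S)"
    by (auto simp: language_eq)
qed


definition V :: "nat set \<Rightarrow> nat \<Rightarrow> nat list set" where "V S n = {w. length w = n \<and> ok S w}"
definition G :: "nat set \<Rightarrow> nat \<Rightarrow> nat list set" where
  "G S n = {w. length w = n \<and> ok S w \<and> (w \<noteq> [] \<longrightarrow> hd w = 1)}"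

lemma lz_Cons_Suc0[simp]: "lz (Suc 0 # w) = 0" unfolding lz_def by simp

lemma finite_V: "finite (V S n)"
proof -
  have "V S n \<subseteq> {w. set w \<subseteq> {0,1} \<and> length w = n}" unfolding V_def using ok_set by auto
  moreover have "finite {w. set w \<subseteq> {0::nat,1} \<and> length w = n}" by (rule finite_lists_length_eq) simp
  ultimately show ?thesis by (rule finite_subset)
qed

lemma G_sub_V: "G S n \<subseteq> V S n" unfolding G_def V_def by auto
lemma finite_G: "finite (G S n)" using finite_subset[OF G_sub_V finite_V] .

lemma split_lz:
  assumes "ok S w"
  shows "w = replicate (lz w) 0 @ dropWhile (\<lambda>x. x \<noteq> 1) w"
    "ok S (dropWhile (\<lambda>x. x \<noteq> 1) w)"
    "dropWhile (\<lambda>x. x \<noteq> 1) w \<noteq> [] \<Longrightarrow> hd (dropWhile (\<lambda>x. x \<noteq> 1) w) = 1"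
    "1 \<in> set w \<Longrightarrow> dropWhile (\<lambda>x. x \<noteq> 1) w \<noteq> []"
proof -
  have "\<forall>y\<in>set (takeWhile (\<lambda>x. x \<noteq> 1) w). y = 0"
    using ok_set[OF assms] set_takeWhileD by fastforce
  then have t: "takeWhile (\<lambda>x. x \<noteq> 1) w = replicate (lz w) 0"
    unfolding lz_def by (rule replicate_length_same[symmetric])
  show eq: "w = replicate (lz w) 0 @ dropWhile (\<lambda>x. x \<noteq> 1) w"
    by (simp only: t[symmetric] takeWhile_dropWhile_id)
  have "ok S (replicate (lz w) 0 @ dropWhile (\<lambda>x. x \<noteq> 1) w)"
    using iffD1[OF arg_cong[OF eq, of "ok S"] assms] .
  then show "ok S (dropWhile (\<lambda>x. x \<noteq> 1) w)" by (rule conjunct1[OF conjunct2[OF ok_append[THEN iffD1]]])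
  show "dropWhile (\<lambda>x. x \<noteq> 1) w \<noteq> [] \<Longrightarrow> hd (dropWhile (\<lambda>x. x \<noteq> 1) w) = 1"
    using hd_dropWhile[of "\<lambda>x. x \<noteq> 1" w] by blast
  show "1 \<in> set w \<Longrightarrow> dropWhile (\<lambda>x. x \<noteq> 1) w \<noteq> []" by simp
qed

lemma D1: assumes "w \<in> V S n" shows "\<exists>a\<le>n. \<exists>u\<in>G S (n-a). w = replicate a 0 @ u"
proof -
  have ok: "ok S w" and l: "length w = n" using assms by (auto simp: V_def)
  let ?u = "dropWhile (\<lambda>x. x \<noteq> 1) w"
  note sp = split_lz[OF ok]
  have "length w = length (replicate (lz w) (0::nat) @ ?u)" using sp(1) by (rule arg_cong)
  then have "length w = lz w + length ?u" by simp
  then have "?u \<in> G S (n - lz w)" using sp l unfolding G_def by auto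
  moreover have "lz w \<le> n" using l \<open>length w = lz w + length ?u\<close> by simp
  ultimately show ?thesis using sp(1) by blast
qed

lemma D2: assumes "w \<in> G S (Suc m)"
  shows "w = 1 # replicate m 0 \<or> (\<exists>s\<in>S. s < m \<and> (\<exists>u\<in>G S (m - s). u \<noteq> [] \<and> w = (1 # replicate s 0) @ u))"
proof -
  obtain t where w: "w = 1 # t" using assms unfolding G_def by (cases w) auto
  have ok: "ok S (1 # t)" and l: "length t = m" using assms w unfolding G_def by auto
  have okt: "ok S t" using ok by simp
  show ?thesis
  proof (cases "1 \<in> set t")
    case False
    then have "\<forall>y\<in>set t. y = 0" using ok_set[OF okt] by auto
    then have "replicate (length t) 0 = t" by (rule replicate_length_same)
    then have "t = replicate m 0" using l by simp
    then show ?thesis using w by simp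
  next
    case True
    let ?u = "dropWhile (\<lambda>x. x \<noteq> 1) t"
    note sp = split_lz[OF okt]
    have S: "lz t \<in> S" using ok True by simp
    have ne: "?u \<noteq> []" using sp(4) True .
    have "length t = length (replicate (lz t) (0::nat) @ ?u)" using sp(1) by (rule arg_cong)
    then have len: "length t = lz t + length ?u" by simp
    then have "?u \<in> G S (m - lz t)" using sp ne l unfolding G_def by auto
    moreover have "lz t < m" using len ne l by (cases ?u) auto
    moreover have "w = (1 # replicate (lz t) 0) @ ?u" using w sp(1) by simp
    ultimately show ?thesis using S ne by blast
  qed
qed

lemma D3: assumes "s \<in> S" "u \<in> G S k" "u \<noteq> []" shows "(1 # replicate s 0) @ u \<in> G S (Suc (s + k))"
proof -
  have ok: "ok S u" "hd u = 1" "length u = k" using assms unfolding G_def by auto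
  have "1 \<in> set u" using ok(2) assms(3) by (cases u) auto
  have lu: "lz u = 0" using ok(2) assms(3) by (cases u) auto
  have "ok S (1 # replicate s 0)" using ok_rep0[of S s] by (simp add: lz_def)
  moreover have "tz (1 # replicate s 0) = s" by (simp add: tz_Cons)
  ultimately have "ok S ((1 # replicate s 0) @ u)" using ok \<open>1 \<in> set u\<close> lu assms(1)
    by (simp only: ok_append) simp
  then show ?thesis using ok unfolding G_def by simp
qed

lemma D3b: "1 # replicate m 0 \<in> G S (Suc m)"
  using ok_rep0[of S m] unfolding G_def by (simp add: lz_def)

lemma D4: fixes u u' :: "nat list" assumes "(1 # replicate s 0) @ u = (1 # replicate s' 0) @ u'" "u \<noteq> []" "u' \<noteq> []" "hd u = 1" "hd u' = 1"
  shows "s = s'"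
proof -
  have "lz (replicate s 0 @ u) = lz (replicate s' 0 @ u')" using assms(1) by simp
  moreover have "lz u = 0" "lz u' = 0" using assms(2-5) by (cases u; cases u'; simp)+
  ultimately show ?thesis by (simp add: lz_rep0)
qed



lemma G0: "G S 0 = {[]}" unfolding G_def by auto

lemma pow_shift: fixes r :: real assumes "0 < r" "s < m'"
  shows "(1/r)^(m' - s) = (1/r)^(Suc m') * r^(s+1)"
proof -
  have "Suc m' = (m' - s) + (s+1)" using assms by simp
  then have "(1/r)^(Suc m') * r^(s+1) = (1/r)^(m'-s) * ((1/r)^(s+1) * r^(s+1))"
    by (metis power_add mult.assoc)
  also have "(1/r)^(s+1) * r^(s+1) = 1" using assms by (simp add: power_mult_distrib[symmetric])
  finally show ?thesis by simp
qed

lemma G_upper: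
  fixes r :: real
  assumes r: "0 < r" "r \<le> 1" and P: "\<forall>M. (\<Sum>s\<in>S\<inter>{..<M}. r^(s+1)) \<le> 1"
  shows "real (card (G S m)) \<le> (m+1) * (1/r)^m"
proof (induction m rule: less_induct)
  case (less m)
  show ?case
  proof (cases m)
    case 0 then show ?thesis by (simp add: G0)
  next
    case (Suc m')
    let ?A = "\<lambda>s. (\<lambda>u. (1 # replicate s 0) @ u) ` G S (m' - s)"
    let ?I = "S \<inter> {..<m'}"
    have sub: "G S m \<subseteq> insert (1 # replicate m' 0) (\<Union>s\<in>?I. ?A s)"
    proof
      fix w assume "w \<in> G S m"
      then have "w = 1 # replicate m' 0 \<or> (\<exists>s\<in>S. s < m' \<and> (\<exists>u\<in>G S (m' - s). u \<noteq> [] \<and> w = (1 # replicate s 0) @ u))"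
        using D2 Suc by simp
      then show "w \<in> insert (1 # replicate m' 0) (\<Union>s\<in>?I. ?A s)" by blast
    qed
    have "card (G S m) \<le> card (insert (1 # replicate m' 0) (\<Union>s\<in>?I. ?A s))"
      by (rule card_mono[OF _ sub]) (auto intro: finite_G)
    also have "\<dots> \<le> Suc (card (\<Union>s\<in>?I. ?A s))"
    proof -
      have "finite (\<Union>s\<in>?I. ?A s)" by (auto intro: finite_G)
      then show ?thesis by (simp add: card_insert_if)
    qed
    also have "card (\<Union>s\<in>?I. ?A s) \<le> (\<Sum>s\<in>?I. card (G S (m' - s)))"
    proof -
      have "card (\<Union>s\<in>?I. ?A s) \<le> (\<Sum>s\<in>?I. card (?A s))" by (rule card_UN_le) simp
      also have "(\<Sum>s\<in>?I. card (?A s)) \<le> (\<Sum>s\<in>?I. card (G S (m' - s)))"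
        by (rule sum_mono) (rule card_image_le, rule finite_G)
      finally show ?thesis .
    qed
    finally have c0: "card (G S m) \<le> Suc (\<Sum>s\<in>?I. card (G S (m' - s)))" by simp
    then have "real (card (G S m)) \<le> real (Suc (\<Sum>s\<in>?I. card (G S (m' - s))))" by (simp only: of_nat_le_iff)
    also have "\<dots> = 1 + (\<Sum>s\<in>?I. real (card (G S (m' - s))))" by (simp add: of_nat_sum)
    finally have c1: "real (card (G S m)) \<le> 1 + (\<Sum>s\<in>?I. real (card (G S (m' - s))))" .
    have "(\<Sum>s\<in>?I. real (card (G S (m' - s)))) \<le> (\<Sum>s\<in>?I. real m * (1/r)^m * r^(s+1))"
    proof (rule sum_mono)
      fix s assume s: "s \<in> ?I"
      then have "m' - s < m" using Suc by auto
      then have "real (card (G S (m' - s))) \<le> (real (m' - s) + 1) * (1/r)^(m' - s)" by (rule less)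
      also have "\<dots> = (real (m' - s) + 1) * ((1/r)^m * r^(s+1))" using pow_shift[OF r(1), of s m'] s Suc by simp
      also have "\<dots> \<le> real m * ((1/r)^m * r^(s+1))"
        using s Suc r by (intro mult_right_mono) auto
      finally show "real (card (G S (m' - s))) \<le> real m * (1/r)^m * r^(s+1)" by (simp add: mult.assoc)
    qed
    also have "\<dots> = real m * (1/r)^m * (\<Sum>s\<in>?I. r^(s+1))" by (simp add: sum_distrib_left)
    also have "\<dots> \<le> real m * (1/r)^m * 1" using P r by (intro mult_left_mono) auto
    finally have c2: "real (card (G S m)) \<le> 1 + real m * (1/r)^m" using c1 by simp
    have "1 \<le> (1/r)^m" using r by (intro one_le_power) simp
    then show ?thesis using c2 by (simp add: algebra_simps)
  qed
qed



lemma pow_shift2: fixes x :: real assumes "0 < x" "k \<le> n"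
  shows "x^(n - k) = x^n * (1/x)^k"
proof -
  have "n = (n - k) + k" using assms by simp
  then have "x^n * (1/x)^k = x^(n-k) * (x^k * (1/x)^k)"
    by (metis power_add mult.assoc)
  also have "x^k * (1/x)^k = 1" using assms by (simp add: power_mult_distrib[symmetric])
  finally show ?thesis by simp
qed

lemma G_nonempty: "G S m \<noteq> {}"
proof (cases m)
  case 0 then show ?thesis by (simp add: G0)
next
  case (Suc k) then show ?thesis using D3b[of k S] by (metis empty_iff)
qed

lemma G_lower:
  fixes \<mu> :: real
  assumes mu: "1 \<le> \<mu>" and F: "finite F" "F \<subseteq> S" "\<forall>s\<in>F. s + 1 \<le> L"
    and sumF: "1 \<le> (\<Sum>s\<in>F. (1/\<mu>)^(s+1))"
  shows "\<mu>^m \<le> real (card (G S m)) * \<mu>^L"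
proof (induction m rule: less_induct)
  case (less m)
  show ?case
  proof (cases "m \<le> L")
    case True
    have "card (G S m) \<ge> 1" using G_nonempty finite_G by (metis One_nat_def Suc_leI card_gt_0_iff)
    moreover have "\<mu>^m \<le> \<mu>^L" using True mu by (intro power_increasing) auto
    moreover have "0 \<le> \<mu>^L" using mu by simp
    ultimately show ?thesis by (metis mult_le_cancel_right1 of_nat_1 of_nat_le_iff order_trans not_le)
  next
    case False
    let ?A = "\<lambda>s. (\<lambda>u. (1 # replicate s 0) @ u) ` G S (m - s - 1)"
    have sub: "(\<Union>s\<in>F. ?A s) \<subseteq> G S m"
    proof (safe)
      fix s u assume s: "s \<in> F" and u: "u \<in> G S (m - s - 1)"
      have "length u = m - s - 1" using u unfolding G_def by auto
      moreover have "m - s - 1 \<ge> 1" using F s False by fastforce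
      ultimately have "u \<noteq> []" by auto
      from D3[OF _ u this] s F have "(1 # replicate s 0) @ u \<in> G S (Suc (s + (m - s - 1)))" by auto
      moreover have "Suc (s + (m - s - 1)) = m" using F s False by fastforce
      ultimately show "(1 # replicate s 0) @ u \<in> G S m" by simp
    qed
    have disj: "\<forall>s\<in>F. \<forall>s'\<in>F. s \<noteq> s' \<longrightarrow> ?A s \<inter> ?A s' = {}"
    proof (intro ballI impI)
      fix s s' assume s: "s \<in> F" "s' \<in> F" "s \<noteq> s'"
      show "?A s \<inter> ?A s' = {}"
      proof (rule ccontr)
        assume "?A s \<inter> ?A s' \<noteq> {}"
        then obtain u u' where u: "u \<in> G S (m - s - 1)" "u' \<in> G S (m - s' - 1)"
          and eq: "(1 # replicate s 0) @ u = (1 # replicate s' 0) @ u'" by blast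
        have "m - s - 1 \<ge> 1" "m - s' - 1 \<ge> 1" using F s False by fastforce+
        then have "u \<noteq> []" "u' \<noteq> []" using u unfolding G_def by auto
        moreover have "hd u = 1" "hd u' = 1" using u \<open>u \<noteq> []\<close> \<open>u' \<noteq> []\<close> unfolding G_def by auto
        ultimately have "s = s'" using D4[OF eq] by blast
        then show False using s by simp
      qed
    qed
    have "card (\<Union>s\<in>F. ?A s) = (\<Sum>s\<in>F. card (?A s))"
      by (rule card_UN_disjoint) (use F disj finite_G in auto)
    also have "\<dots> = (\<Sum>s\<in>F. card (G S (m - s - 1)))"
      by (rule sum.cong) (auto intro!: card_image simp: inj_on_def)
    finally have "(\<Sum>s\<in>F. card (G S (m - s - 1))) \<le> card (G S m)"
      using card_mono[OF finite_G sub] by simp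
    then have c1: "(\<Sum>s\<in>F. real (card (G S (m - s - 1)))) \<le> real (card (G S m))"
      by (metis of_nat_le_iff of_nat_sum)
    have "\<mu>^m \<le> \<mu>^m * (\<Sum>s\<in>F. (1/\<mu>)^(s+1))" using sumF mu by simp
    also have "\<dots> = (\<Sum>s\<in>F. \<mu>^(m - (s+1)))"
      unfolding sum_distrib_left
      by (rule sum.cong) (use F False mu pow_shift2 in auto)
    also have "\<dots> \<le> (\<Sum>s\<in>F. real (card (G S (m - s - 1))) * \<mu>^L)"
    proof (rule sum_mono)
      fix s assume "s \<in> F"
      then have "m - s - 1 < m" using False by auto
      then show "\<mu>^(m - (s+1)) \<le> real (card (G S (m - s - 1))) * \<mu>^L" using less by simp
    qed
    also have "\<dots> = (\<Sum>s\<in>F. real (card (G S (m - s - 1)))) * \<mu>^L" by (simp add: sum_distrib_right)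
    also have "\<dots> \<le> real (card (G S m)) * \<mu>^L" using c1 mu by (intro mult_right_mono) auto
    finally show ?thesis .
  qed
qed

lemma V_upper:
  fixes r :: real
  assumes r: "0 < r" "r \<le> 1" and P: "\<forall>M. (\<Sum>s\<in>S\<inter>{..<M}. r^(s+1)) \<le> 1"
  shows "real (card (V S n)) \<le> (n+1) * (n+1) * (1/r)^n"
proof -
  let ?A = "\<lambda>a. (\<lambda>u. replicate a 0 @ u) ` G S (n - a)"
  have sub: "V S n \<subseteq> (\<Union>a\<in>{..n}. ?A a)" using D1 by fastforce
  have "card (V S n) \<le> card (\<Union>a\<in>{..n}. ?A a)" by (rule card_mono[OF _ sub]) (auto intro: finite_G)
  also have "\<dots> \<le> (\<Sum>a\<in>{..n}. card (?A a))" by (rule card_UN_le) simp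
  also have "\<dots> \<le> (\<Sum>a\<in>{..n}. card (G S (n - a)))"
    by (rule sum_mono) (rule card_image_le, rule finite_G)
  finally have c1: "real (card (V S n)) \<le> (\<Sum>a\<in>{..n}. real (card (G S (n - a))))"
    by (metis of_nat_le_iff of_nat_sum)
  also have "\<dots> \<le> (\<Sum>a\<in>{..n}. real (n+1) * (1/r)^n)"
  proof (rule sum_mono)
    fix a assume a: "a \<in> {..n}"
    have "real (card (G S (n - a))) \<le> real (n - a + 1) * (1/r)^(n - a)"
      using G_upper[OF r P, of "n - a"] by (simp add: algebra_simps)
    also have "\<dots> \<le> real (n+1) * (1/r)^n"
      using r a by (intro mult_mono power_increasing) auto
    finally show "real (card (G S (n - a))) \<le> real (n+1) * (1/r)^n" .
  qed
  also have "\<dots> = real (Suc n) * (real (n+1) * (1/r)^n)" by simp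
  also have "\<dots> = (real n+1) * (real n+1) * (1/r)^n" by (simp only: of_nat_Suc of_nat_add of_nat_1 mult.assoc add.commute)
  finally show ?thesis .
qed



primrec cs :: "real \<Rightarrow> nat \<Rightarrow> real" where
  "cs r 0 = (1 - r) / r^2"
| "cs r (Suc k) = (if cs r k \<ge> r / (1 - r) then (cs r k - 1) / r else cs r k / r)"

definition Sr :: "real \<Rightarrow> nat set" where
  "Sr r = {n. n = 0 \<or> (n \<ge> 1 \<and> cs r (n - 1) \<ge> r / (1 - r))}"

definition a0 :: "real \<Rightarrow> real" where "a0 r = min ((r/(1-r) - 1)/r) ((1 - r) / r^2)"

lemma Sr_Suc: "Suc m \<in> Sr r \<longleftrightarrow> cs r m \<ge> r / (1 - r)" unfolding Sr_def by auto
lemma Sr_0: "0 \<in> Sr r" unfolding Sr_def by auto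

context
  fixes r :: real
  assumes r1: "1/2 < r" and r2: "r < 1"
begin

lemma a0_pos: "0 < a0 r"
proof -
  have "r/(1-r) > 1" using r1 r2 by (simp add: field_simps)
  then have "(r/(1-r) - 1)/r > 0" using r1 by simp
  moreover have "(1 - r) / r^2 > 0" using r1 r2 by simp
  ultimately show ?thesis unfolding a0_def by simp
qed

lemma cs_inv: "a0 r \<le> cs r k \<and> cs r k \<le> 1 / (1 - r)"
proof (induction k)
  case 0
  have "(1 - r)^2 \<le> r^2" using r1 r2 by (simp add: power2_eq_square mult_mono)
  then have "(1 - r) / r^2 \<le> 1 / (1 - r)" using r1 r2 by (simp add: field_simps power2_eq_square)
  then show ?case unfolding a0_def by simp
next
  case (Suc k)
  have rp: "0 < r" "0 < 1 - r" using r1 r2 by auto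
  show ?case
  proof (cases "cs r k \<ge> r / (1 - r)")
    case True
    then have e: "cs r (Suc k) = (cs r k - 1) / r" by simp
    have "a0 r \<le> (r/(1-r) - 1)/r" unfolding a0_def by simp
    also have "\<dots> \<le> (cs r k - 1) / r" using True rp by (intro divide_right_mono) auto
    finally have l: "a0 r \<le> cs r (Suc k)" using e by simp
    have "(cs r k - 1) / r \<le> (1/(1-r) - 1) / r" using Suc rp by (intro divide_right_mono) auto
    also have "\<dots> = 1 / (1 - r)" using rp by (simp add: field_simps)
    finally show ?thesis using l e by simp
  next
    case False
    then have e: "cs r (Suc k) = cs r k / r" by simp
    have "cs r k \<le> cs r k / r" using Suc a0_pos rp r2 by (simp add: field_simps)
    then have l: "a0 r \<le> cs r (Suc k)" using Suc e by simp
    have "cs r k / r \<le> (r / (1 - r)) / r" using False rp by (intro divide_right_mono) auto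
    also have "\<dots> = 1 / (1 - r)" using rp by (simp add: field_simps)
    finally show ?thesis using l e by simp
  qed
qed

lemma Sr_sum: "(\<Sum>s\<in>Sr r \<inter> {..<Suc m}. r^(s+1)) = 1 - cs r m * r^(m+2)"
proof (induction m)
  case 0
  have "Sr r \<inter> {..<Suc 0} = {0}" using Sr_0 by auto
  then show ?case using r1 by (simp add: power2_eq_square)
next
  case (Suc m)
  have rp: "0 < r" using r1 by auto
  show ?case
  proof (cases "cs r m \<ge> r / (1 - r)")
    case True
    then have "Sr r \<inter> {..<Suc (Suc m)} = insert (Suc m) (Sr r \<inter> {..<Suc m})"
      using Sr_Suc by (auto simp: lessThan_Suc)
    then have "(\<Sum>s\<in>Sr r \<inter> {..<Suc (Suc m)}. r^(s+1)) = r^(m+2) + (1 - cs r m * r^(m+2))"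
      using Suc by simp
    also have "\<dots> = 1 - cs r (Suc m) * r^(Suc m + 2)" using True rp by (simp add: field_simps)
    finally show ?thesis .
  next
    case False
    then have "Sr r \<inter> {..<Suc (Suc m)} = Sr r \<inter> {..<Suc m}"
      using Sr_Suc by (auto simp: lessThan_Suc)
    then have "(\<Sum>s\<in>Sr r \<inter> {..<Suc (Suc m)}. r^(s+1)) = 1 - cs r m * r^(m+2)"
      using Suc by simp
    also have "\<dots> = 1 - cs r (Suc m) * r^(Suc m + 2)" using False rp by (simp add: field_simps)
    finally show ?thesis .
  qed
qed

lemma F2: "(\<Sum>s\<in>Sr r \<inter> {..<M}. r^(s+1)) \<le> 1"
proof (cases M)
  case 0 then show ?thesis by simp
next
  case (Suc m)
  have "0 \<le> cs r m" using cs_inv[of m] a0_pos by linarith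
  then have "0 \<le> cs r m * r^(m+2)" using r1 by simp
  then show ?thesis using Sr_sum Suc by simp
qed

lemma F3: assumes "r < r'" shows "\<exists>M. 1 \<le> (\<Sum>s\<in>Sr r \<inter> {..<M}. r'^(s+1))"
proof -
  have rp: "0 < r" "0 < 1 - r" using r1 r2 by auto
  obtain n where n: "r^n < (r' - r) * (1 - r)" using real_arch_pow_inv[of "(r' - r) * (1 - r)" r] assms rp r2 by auto
  have "cs r n * r^(n+2) \<le> 1/(1-r) * r^(n+2)" using cs_inv[of n] rp by (intro mult_right_mono) auto
  also have "\<dots> \<le> 1/(1-r) * r^n" using rp r2 by (intro mult_left_mono power_decreasing) auto
  also have "\<dots> = r^n / (1-r)" by simp
  also have "\<dots> \<le> r' - r" using n rp by (simp add: pos_divide_le_eq)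
  finally have small: "cs r n * r^(n+2) \<le> r' - r" .
  let ?I = "Sr r \<inter> {..<Suc n}"
  have "(\<Sum>s\<in>?I. r'^(s+1)) = (\<Sum>s\<in>?I. r^(s+1)) + (\<Sum>s\<in>?I. r'^(s+1) - r^(s+1))"
    by (simp add: sum_subtractf)
  moreover have "r' - r \<le> (\<Sum>s\<in>?I. r'^(s+1) - r^(s+1))"
  proof -
    have pm: "r^(x+1) \<le> r'^(x+1)" for x using rp assms by (intro power_mono) auto
    have "r'^(0+1) - r^(0+1) \<le> (\<Sum>s\<in>?I. r'^(s+1) - r^(s+1))"
      by (rule member_le_sum) (use Sr_0 pm in auto)
    then show ?thesis by simp
  qed
  ultimately have "1 \<le> (\<Sum>s\<in>?I. r'^(s+1))" using Sr_sum[of n] small by simp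
  then show ?thesis by blast
qed

lemma F4: "\<exists>D\<ge>1. \<forall>t. \<exists>a<D. t + a \<in> Sr r"
proof -
  have rp: "0 < r" "0 < 1 - r" using r1 r2 by auto
  define th where "th = r / (1 - r)"
  have thp: "0 < th" using rp by (simp add: th_def)
  obtain K where K: "r^K < a0 r / th" using real_arch_pow_inv[of "a0 r / th" r] a0_pos thp r2 by auto
  have KK: "th \<le> a0 r / r^K" using K rp thp by (simp add: field_simps)
  have claim: "\<exists>j\<le>K. cs r (t + j) \<ge> th" for t
  proof (rule ccontr)
    assume "\<not> ?thesis"
    then have lt: "\<forall>j\<le>K. cs r (t + j) < th" by auto
    have "j \<le> K \<Longrightarrow> cs r (t + j) = cs r t / r^j" for j
    proof (induction j)
      case 0 then show ?case by simp
      next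
      case (Suc j)
      have "j \<le> K" using Suc.prems by simp
      then have h: "cs r (t + j) < th" using lt by blast
      have ih: "cs r (t + j) = cs r t / r^j" using Suc by simp
      have nh: "\<not> (cs r (t+j) \<ge> r/(1-r))" using h th_def by simp
      have "cs r (t + Suc j) = cs r (t + j) / r" by (simp only: add_Suc_right cs.simps(2) if_not_P[OF nh])
      also have "\<dots> = cs r t / r^j / r" by (simp only: ih)
      also have "\<dots> = cs r t / r^(Suc j)" by (simp only: divide_divide_eq_left power_Suc mult.commute)
      finally show ?case .
    qed
    then have "cs r (t + K) = cs r t / r^K" by simp
    also have "\<dots> \<ge> a0 r / r^K" using cs_inv[of t] rp by (intro divide_right_mono) auto
    finally have "cs r (t + K) \<ge> th" using KK by simp
    then show False using lt by auto
  qed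
  show ?thesis
  proof (rule exI[of _ "K+2"], intro conjI allI)
    fix t
    obtain j where "j \<le> K" "cs r (t + j) \<ge> th" using claim by blast
    then have "Suc (t + j) \<in> Sr r" using Sr_Suc th_def by simp
    then show "\<exists>a<K + 2. t + a \<in> Sr r" using \<open>j \<le> K\<close> by (intro exI[of _ "Suc j"]) auto
  qed simp
qed

end


lemma V_blocks: "blocks (gap_shift S) n = V S n" by (simp add: blocks_eq V_def)

lemma card_V_pos: "card (V S n) \<ge> 1"
proof -
  have "G S n \<noteq> {}" by (rule G_nonempty)
  then have "V S n \<noteq> {}" using G_sub_V by blast
  then show ?thesis using finite_V by (metis One_nat_def Suc_leI card_gt_0_iff)
qed

lemma entropy_main:
  fixes q :: real
  assumes q: "0 < q" "q < 1"
  defines "r \<equiv> 2 powr (-q)"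
  shows "(\<lambda>n. log 2 (real (card (V (Sr r) n))) / real n) \<longlonglongrightarrow> q"
proof -
  let ?S = "Sr r"
  let ?x = "\<lambda>n. log 2 (real (card (V ?S n))) / real n"
  have r1: "1/2 < r" unfolding r_def
  proof -
    have "2 powr (-1) < 2 powr (-q)" using q by (intro powr_less_mono) auto
    then show "1/2 < 2 powr (-q)" by (simp add: powr_minus)
  qed
  have r2: "r < 1" using q unfolding r_def by (simp add: powr_less_one)
  have rp: "0 < r" using r1 by simp
  have lr: "1 / r = 2 powr q" unfolding r_def by (simp add: powr_minus_divide)
  have P: "\<forall>M. (\<Sum>s\<in>?S\<inter>{..<M}. r^(s+1)) \<le> 1" using F2[OF r1 r2] by blast
  show ?thesis
  proof (rule order_tendstoI)
    fix a assume a: "q < a"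
    have lim: "(\<lambda>n. 2 * log 2 (real n + 1) / real n) \<longlonglongrightarrow> 0" by real_asymp
    then have ev: "eventually (\<lambda>n. 2 * log 2 (real n + 1) / real n < a - q) sequentially"
      using a by (intro order_tendstoD) auto
    show "eventually (\<lambda>n. ?x n < a) sequentially"
      using ev eventually_gt_at_top[of 0]
    proof eventually_elim
      case (elim n)
      have c: "real (card (V ?S n)) \<le> (real n+1) * (real n+1) * (1/r)^n" using V_upper[OF rp less_imp_le[OF r2] P, of n] .
      have pos: "0 < real (card (V ?S n))" using card_V_pos[of ?S n] by simp
      have "log 2 (real (card (V ?S n))) \<le> log 2 ((real n+1) * (real n+1) * (1/r)^n)"
        using c pos by simp
      also have "\<dots> = 2 * log 2 (real n + 1) + n * q"
        using rp by (simp add: log_mult log_nat_power lr power2_eq_square)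
      finally have "?x n \<le> (2 * log 2 (real n + 1) + n * q) / n"
        using elim by (simp add: divide_right_mono)
      also have "\<dots> = 2 * log 2 (real n + 1) / n + q" using elim by (simp add: field_simps)
      finally show ?case using elim by simp
    qed
  next
    fix a assume a: "a < q"
    define q' where "q' = max ((a + q)/2) (q/2)"
    have "a < (a + q)/2" using a by simp
    then have q': "a < q'" "q' < q" "0 \<le> q'" using a q unfolding q'_def by (auto simp: max_def)
    define mu where "mu = 2 powr q'"
    have mu1: "1 \<le> mu" unfolding mu_def using q' by (intro ge_one_powr_ge_zero) auto
    have rr: "r < 1/mu" unfolding mu_def r_def using q' by (simp add: powr_minus_divide[symmetric])
    obtain M where M: "1 \<le> (\<Sum>s\<in>?S \<inter> {..<M}. (1/mu)^(s+1))" using F3[OF r1 r2 rr] by blast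
    have low: "mu^n \<le> real (card (V ?S n)) * mu^M" for n
    proof -
      have "mu^n \<le> real (card (G ?S n)) * mu^M"
        by (rule G_lower[OF mu1 _ _ _ M]) auto
      also have "\<dots> \<le> real (card (V ?S n)) * mu^M"
        using card_mono[OF finite_V G_sub_V] mu1 by (intro mult_right_mono) auto
      finally show ?thesis .
    qed
    have lim: "(\<lambda>n. q' - M * q' / real n) \<longlonglongrightarrow> q'" by real_asymp
    then have ev: "eventually (\<lambda>n. a < q' - M * q' / real n) sequentially"
      using q' by (intro order_tendstoD) auto
    show "eventually (\<lambda>n. a < ?x n) sequentially"
      using ev eventually_gt_at_top[of 0]
    proof eventually_elim
      case (elim n)
      have pos: "0 < real (card (V ?S n))" using card_V_pos[of ?S n] by simp
      have "n * q' = log 2 (mu^n)" unfolding mu_def by (simp add: log_nat_power)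
      also have "\<dots> \<le> log 2 (real (card (V ?S n)) * mu^M)" using low[of n] mu1 by (intro log_mono) auto
      also have "\<dots> = log 2 (real (card (V ?S n))) + M * q'"
        using pos mu1 unfolding mu_def by (simp add: log_mult log_nat_power)
      finally have h: "n * q' - M * q' \<le> log 2 (real (card (V ?S n)))" by simp
      then have "(n * q' - M * q') / n \<le> ?x n" using elim by (simp add: divide_right_mono)
      moreover have "(n * q' - M * q') / n = q' - M * q' / n" using elim by (simp add: diff_divide_distrib)
      ultimately show ?case using elim by simp
    qed
  qed
qed

theorem proposition4p2:
  fixes q :: real
  assumes "0 < q" and "q < 1"
  shows "\<exists>S :: nat set. S \<noteq> {} \<and> has_specification (gap_shift S) \<and> has_entropy (gap_shift S) q"
proof -
  define r where "r = 2 powr (-q)"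
  have r1: "1/2 < r" unfolding r_def
  proof -
    have "2 powr (-1) < 2 powr (-q)" using assms by (intro powr_less_mono) auto
    then show "1/2 < 2 powr (-q)" by (simp add: powr_minus)
  qed
  have r2: "r < 1" using assms unfolding r_def by (simp add: powr_less_one)
  obtain D where D: "D \<ge> 1" "\<forall>t. \<exists>a<D. t + a \<in> Sr r" using F4[OF r1 r2] by blast
  have "has_specification (gap_shift (Sr r))" by (rule spec_lemma[OF Sr_0 D])
  moreover have "has_entropy (gap_shift (Sr r)) q"
    unfolding has_entropy_def V_blocks r_def using entropy_main[OF assms] .
  moreover have "Sr r \<noteq> {}" using Sr_0 by blast
  ultimately show ?thesis by blast
qed

end
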